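(* Let $(X,\tau)$ be an extended locally convex space and let $\tau_F$ be its finest locally convex topology. Then $(X,\tau)$ is Hausdorff if and only if $(X,\tau_F)$ is Hausdorff.
   Context: An extended seminorm on a vector space $X$ over $\mathbb{R}$ or $\mathbb{C}$ is a map $\rho:X\to[0,\infty]$ with $\rho(\alpha x)=|\alpha|\rho(x)$ and $\rho(x+y)\le\rho(x)+\rho(y)$. An extended locally convex space $(X,\tau)$ is a vector space with the topology induced by a family $\{\rho_i\}$ of extended seminorms (neighborhood base at $x_0$: $\{x:\max_{i\in J}\rho_i(x-x_0)<\varepsilon\}$, $J$ finite, $\varepsilon>0$). A locally convex topology is one induced in this way by finite-valued seminorms. The finest locally convex topology $\tau_F$ of $(X,\tau)$ is the locally convex topology on $X$ with $\tau_F\subseteq\tau$ such that every locally convex topology $\sigma\subseteq\tau$ on $X$ satisfies $\sigma\subseteq\tau_F$. *)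

theory Defs
  imports "HOL-Analysis.Analysis"
begin

text \<open>Extended seminorms on a vector space whose scalar multiplication is sc
  (sc = scaleR for real, sc = scaleC for complex vector spaces).  Values in [0,\<infinity>]
  are modelled by ennreal.\<close>
definition ext_seminorm :: "('k::real_normed_field \<Rightarrow> 'a::ab_group_add \<Rightarrow> 'a) \<Rightarrow> ('a \<Rightarrow> ennreal) \<Rightarrow> bool" where
  "ext_seminorm sc \<rho> \<longleftrightarrow>
     (\<forall>c x. \<rho> (sc c x) = ennreal (norm c) * \<rho> x) \<and>
     (\<forall>x y. \<rho> (x + y) \<le> \<rho> x + \<rho> y)"

definition fin_seminorm :: "('k::real_normed_field \<Rightarrow> 'a::ab_group_add \<Rightarrow> 'a) \<Rightarrow> ('a \<Rightarrow> ennreal) \<Rightarrow> bool" where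
  "fin_seminorm sc \<rho> \<longleftrightarrow> ext_seminorm sc \<rho> \<and> (\<forall>x. \<rho> x < \<infinity>)"

definition seminorm_topology :: "('a::ab_group_add \<Rightarrow> ennreal) set \<Rightarrow> 'a topology" where
  "seminorm_topology P = topology (\<lambda>U. \<forall>x0\<in>U. \<exists>J \<epsilon>. finite J \<and> J \<subseteq> P \<and> (\<epsilon>::real) > 0 \<and>
       {x. \<forall>\<rho>\<in>J. \<rho> (x - x0) < ennreal \<epsilon>} \<subseteq> U)"

definition ext_lc_topology :: "('k::real_normed_field \<Rightarrow> 'a::ab_group_add \<Rightarrow> 'a) \<Rightarrow> 'a topology \<Rightarrow> bool" where
  "ext_lc_topology sc T \<longleftrightarrow> (\<exists>P. (\<forall>\<rho>\<in>P. ext_seminorm sc \<rho>) \<and> T = seminorm_topology P)"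

definition lc_topology :: "('k::real_normed_field \<Rightarrow> 'a::ab_group_add \<Rightarrow> 'a) \<Rightarrow> 'a topology \<Rightarrow> bool" where
  "lc_topology sc T \<longleftrightarrow> (\<exists>P. (\<forall>\<rho>\<in>P. fin_seminorm sc \<rho>) \<and> T = seminorm_topology P)"

definition coarser :: "'a topology \<Rightarrow> 'a topology \<Rightarrow> bool" where
  "coarser \<sigma> \<tau> \<longleftrightarrow> (\<forall>U. openin \<sigma> U \<longrightarrow> openin \<tau> U)"

definition finest_lc_topology :: "('k::real_normed_field \<Rightarrow> 'a::ab_group_add \<Rightarrow> 'a) \<Rightarrow> 'a topology \<Rightarrow> 'a topology \<Rightarrow> bool" where
  "finest_lc_topology sc \<tau> \<tau>F \<longleftrightarrow> lc_topology sc \<tau>F \<and> coarser \<tau>F \<tau> \<and>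
     (\<forall>\<sigma>. lc_topology sc \<sigma> \<and> coarser \<sigma> \<tau> \<longrightarrow> coarser \<sigma> \<tau>F)"

end

theory Submission
  imports Defs
begin

definition "snopen P U \<longleftrightarrow> (\<forall>x0\<in>U. \<exists>J \<epsilon>. finite J \<and> J \<subseteq> P \<and> (\<epsilon>::real) > 0 \<and>
       {x. \<forall>\<rho>\<in>J. \<rho> (x - x0) < ennreal \<epsilon>} \<subseteq> U)"

lemma snopenD:
  assumes "snopen P U" "x0 \<in> U"
  obtains J e where "finite J" "J \<subseteq> P" "(e::real) > 0" "{x. \<forall>\<rho>\<in>J. \<rho> (x - x0) < ennreal e} \<subseteq> U"
proof -
  have "\<exists>J \<epsilon>. finite J \<and> J \<subseteq> P \<and> (\<epsilon>::real) > 0 \<and> {x. \<forall>\<rho>\<in>J. \<rho> (x - x0) < ennreal \<epsilon>} \<subseteq> U"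
    using assms unfolding snopen_def by (rule bspec)
  then show ?thesis by (elim exE conjE) (rule that; assumption)
qed

lemma snopenI:
  assumes "\<And>x0. x0 \<in> U \<Longrightarrow> \<exists>J \<epsilon>. finite J \<and> J \<subseteq> P \<and> (\<epsilon>::real) > 0 \<and> {x. \<forall>\<rho>\<in>J. \<rho> (x - x0) < ennreal \<epsilon>} \<subseteq> U"
  shows "snopen P U"
  unfolding snopen_def using assms by (rule ballI)

lemma snopen_Int: assumes "snopen P S" "snopen P T" shows "snopen P (S \<inter> T)"
proof (rule snopenI)
  fix x0 assume x: "x0 \<in> S \<inter> T"
  then have xS: "x0 \<in> S" and xT: "x0 \<in> T" by simp_all
  obtain J1 e1 where 1: "finite J1" "J1 \<subseteq> P" "e1 > 0" "{x. \<forall>\<rho>\<in>J1. \<rho> (x - x0) < ennreal e1} \<subseteq> S"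
    by (rule snopenD[OF assms(1) xS])
  obtain J2 e2 where 2: "finite J2" "J2 \<subseteq> P" "e2 > 0" "{x. \<forall>\<rho>\<in>J2. \<rho> (x - x0) < ennreal e2} \<subseteq> T"
    by (rule snopenD[OF assms(2) xT])
  have sub: "{x. \<forall>\<rho>\<in>J1 \<union> J2. \<rho> (x - x0) < ennreal (min e1 e2)} \<subseteq> S \<inter> T"
  proof
    fix x assume "x \<in> {x. \<forall>\<rho>\<in>J1 \<union> J2. \<rho> (x - x0) < ennreal (min e1 e2)}"
    then have a: "\<And>\<rho>. \<rho> \<in> J1 \<union> J2 \<Longrightarrow> \<rho> (x - x0) < ennreal (min e1 e2)" by simp
    have m1: "ennreal (min e1 e2) \<le> ennreal e1" and m2: "ennreal (min e1 e2) \<le> ennreal e2"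
      by (simp_all add: ennreal_leI)
    have "x \<in> {x. \<forall>\<rho>\<in>J1. \<rho> (x - x0) < ennreal e1}"
      unfolding mem_Collect_eq
    proof (intro ballI)
      fix \<rho> assume "\<rho> \<in> J1"
      then have "\<rho> (x - x0) < ennreal (min e1 e2)" using a by simp
      then show "\<rho> (x - x0) < ennreal e1" using m1 by (rule order_less_le_trans)
    qed
    then have "x \<in> S" using 1(4) by (rule subsetD[rotated])
    moreover have "x \<in> {x. \<forall>\<rho>\<in>J2. \<rho> (x - x0) < ennreal e2}"
      unfolding mem_Collect_eq
    proof (intro ballI)
      fix \<rho> assume "\<rho> \<in> J2"
      then have "\<rho> (x - x0) < ennreal (min e1 e2)" using a by simp
      then show "\<rho> (x - x0) < ennreal e2" using m2 by (rule order_less_le_trans)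
    qed
    then have "x \<in> T" using 2(4) by (rule subsetD[rotated])
    ultimately show "x \<in> S \<inter> T" by (rule IntI)
  qed
  have "finite (J1 \<union> J2)" "J1 \<union> J2 \<subseteq> P" "min e1 e2 > 0" using 1(1-3) 2(1-3) by simp_all
  then show "\<exists>J \<epsilon>. finite J \<and> J \<subseteq> P \<and> (\<epsilon>::real) > 0 \<and> {x. \<forall>\<rho>\<in>J. \<rho> (x - x0) < ennreal \<epsilon>} \<subseteq> S \<inter> T"
    using sub by (intro exI conjI)
qed

lemma snopen_Union: assumes "\<And>S. S \<in> K \<Longrightarrow> snopen P S" shows "snopen P (\<Union>K)"
proof (rule snopenI)
  fix x0 assume "x0 \<in> \<Union>K"
  then obtain S where S: "S \<in> K" "x0 \<in> S" by (rule UnionE)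
  obtain J e where J: "finite J" "J \<subseteq> P" "(e::real) > 0" "{x. \<forall>\<rho>\<in>J. \<rho> (x - x0) < ennreal e} \<subseteq> S"
    by (rule snopenD[OF assms[OF S(1)] S(2)])
  have "S \<subseteq> \<Union>K" using S(1) by (rule Union_upper)
  with J(4) have "{x. \<forall>\<rho>\<in>J. \<rho> (x - x0) < ennreal e} \<subseteq> \<Union>K" by (rule subset_trans)
  then show "\<exists>J \<epsilon>. finite J \<and> J \<subseteq> P \<and> (\<epsilon>::real) > 0 \<and> {x. \<forall>\<rho>\<in>J. \<rho> (x - x0) < ennreal \<epsilon>} \<subseteq> \<Union>K"
    using J(1-3) by (intro exI conjI)
qed

lemma istop_sn: "istopology (snopen P)"
  unfolding istopology_def
proof (intro conjI allI impI)
  fix S T assume "snopen P S" "snopen P T"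
  then show "snopen P (S \<inter> T)" by (rule snopen_Int)
next
  fix K assume "\<forall>S\<in>K. snopen P S"
  then show "snopen P (\<Union>K)" by (intro snopen_Union) simp
qed

lemma openin_sn: "openin (seminorm_topology P) U \<longleftrightarrow> snopen P U"
proof -
  have "seminorm_topology P = topology (snopen P)"
    unfolding seminorm_topology_def snopen_def[abs_def] by (rule refl)
  then show ?thesis by (simp add: topology_inverse'[OF istop_sn])
qed

lemma topspace_sn: "topspace (seminorm_topology P) = UNIV"
proof -
  have "snopen P UNIV"
  proof (rule snopenI)
    fix x0 :: 'a
    have "{x. \<forall>\<rho>\<in>{}. \<rho> (x - x0) < ennreal 1} \<subseteq> UNIV" by simp
    then show "\<exists>J \<epsilon>. finite J \<and> J \<subseteq> P \<and> (\<epsilon>::real) > 0 \<and> {x. \<forall>\<rho>\<in>J. \<rho> (x - x0) < ennreal \<epsilon>} \<subseteq> UNIV"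
      by (intro exI[of _ "{}"] exI[of _ "1::real"] conjI) simp_all
  qed
  then have "openin (seminorm_topology P) UNIV" by (simp add: openin_sn)
  then have "UNIV \<subseteq> topspace (seminorm_topology P)" by (rule openin_subset)
  then show ?thesis by (rule top.extremum_uniqueI)
qed

lemma coarser_hausdorff:
  assumes "coarser S T" "topspace S = UNIV" "topspace T = UNIV" "Hausdorff_space S"
  shows "Hausdorff_space T"
  unfolding Hausdorff_space_def
proof (intro allI impI)
  fix x y assume "x \<in> topspace T \<and> y \<in> topspace T \<and> x \<noteq> y"
  then have "x \<in> topspace S" "y \<in> topspace S" "x \<noteq> y" using assms(2) by simp_all
  then obtain U V where "openin S U" "openin S V" "x \<in> U" "y \<in> V" "disjnt U V"
    using assms(4) unfolding Hausdorff_space_def by meson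
  moreover have "openin T U" "openin T V" using assms(1) \<open>openin S U\<close> \<open>openin S V\<close> unfolding coarser_def by simp_all
  ultimately show "\<exists>U V. openin T U \<and> openin T V \<and> x \<in> U \<and> y \<in> V \<and> disjnt U V" by (intro exI conjI)
qed

lemma hausdorff_sep:
  assumes "Hausdorff_space (seminorm_topology P)" "d \<noteq> 0"
  shows "\<exists>\<rho>\<in>P. \<rho> d > 0"
proof (rule ccontr)
  assume n: "\<not> (\<exists>\<rho>\<in>P. \<rho> d > 0)"
  have "(0::'a) \<in> topspace (seminorm_topology P)" "d \<in> topspace (seminorm_topology P)" "0 \<noteq> d"
    using assms(2) by (simp_all add: topspace_sn)
  then obtain U V where UV: "openin (seminorm_topology P) U" "openin (seminorm_topology P) V" "0 \<in> U" "d \<in> V" "disjnt U V"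
    using assms(1) unfolding Hausdorff_space_def by meson
  have "snopen P U" using UV(1) by (simp add: openin_sn)
  then obtain J e where J: "finite J" "J \<subseteq> P" "(e::real) > 0" "{x. \<forall>\<rho>\<in>J. \<rho> (x - 0) < ennreal e} \<subseteq> U"
    using UV(3) by (rule snopenD)
  have "\<forall>\<rho>\<in>J. \<rho> (d - 0) < ennreal e"
  proof
    fix \<rho> assume "\<rho> \<in> J"
    then have "\<rho> \<in> P" using J(2) by (rule subsetD[rotated])
    then have "\<rho> d = 0" using n by (simp add: not_less)
    then show "\<rho> (d - 0) < ennreal e" using J(3) by simp
  qed
  then have "d \<in> U" using J(4) by (simp add: subset_eq)
  then show False using UV(4,5) by (simp add: disjnt_iff)
qed

lemma coarser_single:
  assumes "\<rho> \<in> P" "\<And>z. q z \<le> \<rho> z"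
  shows "coarser (seminorm_topology {q}) (seminorm_topology P)"
  unfolding coarser_def openin_sn
proof (intro allI impI)
  fix U assume U: "snopen {q} U"
  show "snopen P U"
  proof (rule snopenI)
    fix x0 assume "x0 \<in> U"
    with U obtain J e where J: "finite J" "J \<subseteq> {q}" "(e::real) > 0" "{x. \<forall>\<rho>\<in>J. \<rho> (x - x0) < ennreal e} \<subseteq> U"
      by (rule snopenD)
    have "{x. \<forall>r\<in>{\<rho>}. r (x - x0) < ennreal e} \<subseteq> U"
    proof
      fix x assume "x \<in> {x. \<forall>r\<in>{\<rho>}. r (x - x0) < ennreal e}"
      then have "\<rho> (x - x0) < ennreal e" by simp
      then have qx: "q (x - x0) < ennreal e" using assms(2) by (rule order_le_less_trans[rotated])
      have "x \<in> {x. \<forall>\<rho>\<in>J. \<rho> (x - x0) < ennreal e}"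
      proof (unfold mem_Collect_eq, intro ballI)
        fix r assume "r \<in> J"
        then have "r = q" using J(2) by auto
        then show "r (x - x0) < ennreal e" using qx by simp
      qed
      then show "x \<in> U" using J(4) by (rule subsetD[rotated])
    qed
    then show "\<exists>J \<epsilon>. finite J \<and> J \<subseteq> P \<and> (\<epsilon>::real) > 0 \<and> {x. \<forall>\<rho>\<in>J. \<rho> (x - x0) < ennreal \<epsilon>} \<subseteq> U"
      using J(3) assms(1) by (intro exI[of _ "{\<rho>}"] exI[of _ e] conjI) simp_all
  qed
qed



lemma construct_q:
  fixes sc :: "'k::real_normed_field \<Rightarrow> 'a::ab_group_add \<Rightarrow> 'a"
  assumes vs: "vector_space sc" and rho: "ext_seminorm sc \<rho>" and d: "\<rho> d > 0"
  shows "\<exists>q. fin_seminorm sc q \<and> (\<forall>z. q z \<le> \<rho> z) \<and> q d > 0"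
proof -
  interpret V: vector_space sc by fact
  have vk: "vector_space ((*) :: 'k \<Rightarrow> 'k \<Rightarrow> 'k)"
    by unfold_locales (auto simp: algebra_simps)
  interpret p1: vector_space_pair sc sc by (intro vector_space_pair.intro vs)
  interpret p2: vector_space_pair sc "(*) :: 'k \<Rightarrow> 'k \<Rightarrow> 'k" by (intro vector_space_pair.intro vs vk)
  have hom: "\<rho> (sc c x) = ennreal (norm c) * \<rho> x" for c x using rho unfolding ext_seminorm_def by blast
  have tri: "\<rho> (x + y) \<le> \<rho> x + \<rho> y" for x y using rho unfolding ext_seminorm_def by blast
  have r0: "\<rho> 0 = 0" using hom[of 0 0] by simp
  define M where "M = {z. \<rho> z < top}"
  have subM: "V.subspace M"
    unfolding V.subspace_def M_def
  proof (intro conjI ballI allI)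
    show "0 \<in> {z. \<rho> z < top}" using r0 by simp
    fix x y assume "x \<in> {z. \<rho> z < top}" "y \<in> {z. \<rho> z < top}"
    then show "x + y \<in> {z. \<rho> z < top}" using tri[of x y]
      by (simp add: order_le_less_trans ennreal_add_less_top)
  next
    fix c x assume "x \<in> {z. \<rho> z < top}"
    then show "sc c x \<in> {z. \<rho> z < top}" using hom[of c x] by (simp add: ennreal_mult_less_top)
  qed
  obtain \<pi> where pi: "\<pi> ` UNIV \<subseteq> M" "Vector_Spaces.linear sc sc \<pi>" "\<forall>v\<in>M. \<pi> (id v) = v"
    using p1.linear_exists_left_inverse_on[OF V.linear_id subM] by auto
  interpret lpi: Vector_Spaces.linear sc sc \<pi> by fact
  define e where "e = d - \<pi> d"
  obtain g where g: "Vector_Spaces.linear sc (*) g" "e \<noteq> 0 \<Longrightarrow> g e = 1"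
  proof (cases "e = 0")
    case True
    then show ?thesis using that[of "p2.construct {} (\<lambda>_. 1)"] p2.linear_construct[OF V.independent_empty] by auto
  next
    case False
    have ind: "V.independent {e}" using False V.independent_insert by simp
    then show ?thesis using that[of "p2.construct {e} (\<lambda>_. 1)"] p2.linear_construct[OF ind] p2.construct_basis[OF ind]
      by auto
  qed
  interpret lg: Vector_Spaces.linear sc "(*)" g by fact
  define q where "q z = \<rho> (\<pi> z) + ennreal (norm (g (z - \<pi> z)))" for z
  have fin: "\<rho> (\<pi> z) < top" for z using pi(1) unfolding M_def by auto
  have F1: "fin_seminorm sc q"
    unfolding fin_seminorm_def ext_seminorm_def
  proof (intro conjI allI)
    fix c x
    have "g (sc c x - \<pi> (sc c x)) = c * g (x - \<pi> x)"
      by (simp add: lpi.scale V.scale_right_diff_distrib[symmetric] lg.scale)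
    then show "q (sc c x) = ennreal (norm c) * q x"
      unfolding q_def by (simp add: lpi.scale hom norm_mult ennreal_mult distrib_left)
  next
    fix x y
    have e1: "g ((x + y) - \<pi> (x + y)) = g (x - \<pi> x) + g (y - \<pi> y)"
      by (simp add: lpi.add lg.add[symmetric] algebra_simps)
    have "ennreal (norm (g ((x + y) - \<pi> (x + y)))) \<le> ennreal (norm (g (x - \<pi> x))) + ennreal (norm (g (y - \<pi> y)))"
      unfolding e1 by (simp add: ennreal_plus[symmetric] norm_triangle_ineq ennreal_leI del: ennreal_plus)
    moreover have "\<rho> (\<pi> (x + y)) \<le> \<rho> (\<pi> x) + \<rho> (\<pi> y)" by (simp add: lpi.add tri)
    ultimately show "q (x + y) \<le> q x + q y" unfolding q_def
      by (metis (no_types, lifting) add_mono ab_semigroup_add_class.add_ac(1) add.commute add.left_commute)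
  next
    fix x show "q x < \<infinity>" unfolding q_def using fin[of x] by (simp add: ennreal_add_less_top)
  qed
  have F2: "q z \<le> \<rho> z" for z
  proof (cases "z \<in> M")
    case True
    then show ?thesis using pi(3) unfolding q_def by simp
  next
    case False
    then show ?thesis unfolding M_def by (simp add: top.extremum_unique not_less)
  qed
  have F3: "q d > 0"
  proof (cases "d \<in> M")
    case True
    then have "\<pi> d = d" using pi(3) by simp
    then show ?thesis using d unfolding q_def by (metis add_pos_nonneg zero_le)
  next
    case False
    then have "e \<noteq> 0" using pi(1) unfolding e_def by auto
    then have "g e = 1" using g by simp
    then show ?thesis unfolding q_def e_def[symmetric] by (simp add: add_nonneg_pos)
  qed
  show ?thesis
    by (rule exI[of _ q]) (simp add: F1 F2 F3)
qed



lemma fin_real: "fin_seminorm sc q \<Longrightarrow> q z = ennreal (enn2real (q z))"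
  unfolding fin_seminorm_def by simp

lemma fin_neg:
  fixes sc :: "'k::real_normed_field \<Rightarrow> 'a::ab_group_add \<Rightarrow> 'a"
  assumes "vector_space sc" "fin_seminorm sc q"
  shows "q (- w) = q w"
proof -
  interpret V: vector_space sc by fact
  have e: "sc (-1) w = - w" by (simp add: V.scale_minus_left)
  have "q (sc (-1) w) = ennreal (norm (-1::'k)) * q w"
    using assms(2) unfolding fin_seminorm_def ext_seminorm_def by blast
  then show ?thesis unfolding e by simp
qed

lemma fin_tri: "fin_seminorm sc q \<Longrightarrow> q (x + y) \<le> q x + q y"
  unfolding fin_seminorm_def ext_seminorm_def by blast

lemma fin_zero:
  fixes sc :: "'k::real_normed_field \<Rightarrow> 'a::ab_group_add \<Rightarrow> 'a"
  assumes "vector_space sc" "fin_seminorm sc q"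
  shows "q 0 = 0"
proof -
  interpret V: vector_space sc by fact
  have "q (sc 0 0) = ennreal (norm (0::'k)) * q 0"
    using assms(2) unfolding fin_seminorm_def ext_seminorm_def by blast
  then show ?thesis by simp
qed

lemma ball_open:
  fixes sc :: "'k::real_normed_field \<Rightarrow> 'a::ab_group_add \<Rightarrow> 'a"
  assumes "vector_space sc" "fin_seminorm sc q"
  shows "openin (seminorm_topology {q}) {z. q (z - x) < ennreal r}"
  unfolding openin_sn
proof (rule snopenI)
  fix x0 assume "x0 \<in> {z. q (z - x) < ennreal r}"
  then have x0: "q (x0 - x) < ennreal r" by simp
  define t where "t = enn2real (q (x0 - x))"
  have t: "q (x0 - x) = ennreal t" "t \<ge> 0" using fin_real[OF assms(2)] unfolding t_def by auto
  have tr: "t < r" using x0 t by (simp add: ennreal_less_iff)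
  have sub: "{z. \<forall>\<rho>\<in>{q}. \<rho> (z - x0) < ennreal (r - t)} \<subseteq> {z. q (z - x) < ennreal r}"
  proof
    fix z assume "z \<in> {z. \<forall>\<rho>\<in>{q}. \<rho> (z - x0) < ennreal (r - t)}"
    then have a: "q (z - x0) < ennreal (r - t)" by simp
    define a0 where "a0 = enn2real (q (z - x0))"
    have a0: "q (z - x0) = ennreal a0" "a0 \<ge> 0" using fin_real[OF assms(2)] unfolding a0_def by auto
    have "a0 < r - t" using a a0 by (simp add: ennreal_less_iff)
    have "q (z - x) \<le> q (z - x0) + q (x0 - x)" using fin_tri[OF assms(2), of "z - x0" "x0 - x"] by simp
    also have "\<dots> = ennreal (a0 + t)" using a0 t by (simp add: ennreal_plus)
    also have "\<dots> < ennreal r" using \<open>a0 < r - t\<close> a0 t by (intro ennreal_lessI) auto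
    finally show "z \<in> {z. q (z - x) < ennreal r}" by simp
  qed
  have "finite {q}" "{q} \<subseteq> {q}" "0 < r - t" using tr by simp_all
  then show "\<exists>J \<epsilon>. finite J \<and> J \<subseteq> {q} \<and> (\<epsilon>::real) > 0 \<and> {z. \<forall>\<rho>\<in>J. \<rho> (z - x0) < ennreal \<epsilon>} \<subseteq> {z. q (z - x) < ennreal r}"
    using sub by (intro exI conjI)
qed

lemma main:
  fixes sc :: "'k::real_normed_field \<Rightarrow> 'a::ab_group_add \<Rightarrow> 'a"
  assumes vs: "vector_space sc" and T: "ext_lc_topology sc T" and F: "finest_lc_topology sc T TF"
  shows "Hausdorff_space T \<longleftrightarrow> Hausdorff_space TF"
proof -
  obtain P where P: "\<forall>\<rho>\<in>P. ext_seminorm sc \<rho>" "T = seminorm_topology P"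
    using T unfolding ext_lc_topology_def by (elim exE conjE) (rule that; assumption)
  have "lc_topology sc TF" using F unfolding finest_lc_topology_def by (elim conjE)
  then obtain P' where P': "TF = seminorm_topology P'"
    unfolding lc_topology_def by (elim exE conjE) (rule that; assumption)
  have cF: "coarser TF T" using F unfolding finest_lc_topology_def by (elim conjE)
  have fin: "coarser \<sigma> TF" if "lc_topology sc \<sigma>" "coarser \<sigma> T" for \<sigma>
    using F that unfolding finest_lc_topology_def by simp
  show ?thesis
  proof
    assume H: "Hausdorff_space T"
    show "Hausdorff_space TF"
      unfolding Hausdorff_space_def
    proof (intro allI impI)
      fix x y assume "x \<in> topspace TF \<and> y \<in> topspace TF \<and> x \<noteq> y"
      then have "y - x \<noteq> 0" by (metis eq_iff_diff_eq_0)
      then have "\<exists>\<rho>\<in>P. \<rho> (y - x) > 0" using H unfolding P(2) by (intro hausdorff_sep)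
      then obtain \<rho> where r: "\<rho> \<in> P" "\<rho> (y - x) > 0" by (rule bexE)
      have er: "ext_seminorm sc \<rho>" using P(1) r(1) by simp
      obtain q where q: "fin_seminorm sc q" "\<forall>z. q z \<le> \<rho> z" "q (y - x) > 0"
        using construct_q[OF vs er r(2)] by (elim exE conjE) (rule that; assumption)
      have lq: "lc_topology sc (seminorm_topology {q})" unfolding lc_topology_def
        using q(1) by (intro exI[of _ "{q}"]) simp
      have qz: "q z \<le> \<rho> z" for z using q(2) by (rule spec)
      moreover have "coarser (seminorm_topology {q}) T" unfolding P(2)
        by (rule coarser_single[OF r(1) qz])
      ultimately have cq: "coarser (seminorm_topology {q}) TF" using lq by (intro fin)
      define s where "s = enn2real (q (y - x))"
      have s1: "q (y - x) = ennreal s" using fin_real[OF q(1)] unfolding s_def .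
      have "q (y - x) < \<infinity>" using q(1) unfolding fin_seminorm_def by simp
      then have s2: "s > 0" using q(3) by (simp add: s_def enn2real_positive_iff)
      define U where "U = {z. q (z - x) < ennreal (s/2)}"
      define W where "W = {z. q (z - y) < ennreal (s/2)}"
      have "openin (seminorm_topology {q}) U" unfolding U_def by (rule ball_open[OF vs q(1)])
      then have oU: "openin TF U" using cq unfolding coarser_def by simp
      have "openin (seminorm_topology {q}) W" unfolding W_def by (rule ball_open[OF vs q(1)])
      then have oW: "openin TF W" using cq unfolding coarser_def by simp
      have q0: "q 0 = 0" by (rule fin_zero[OF vs q(1)])
      have xU: "x \<in> U" unfolding U_def using q0 s2 by simp
      have yW: "y \<in> W" unfolding W_def using q0 s2 by simp
      have "disjnt U W"
        unfolding disjnt_def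
      proof (rule ccontr)
        assume "U \<inter> W \<noteq> {}"
        then obtain z where "z \<in> U \<inter> W" by blast
        then have z: "q (z - x) < ennreal (s/2)" "q (z - y) < ennreal (s/2)" unfolding U_def W_def by simp_all
        define a where "a = enn2real (q (z - x))"
        define b where "b = enn2real (q (z - y))"
        have a: "q (z - x) = ennreal a" "a \<ge> 0" using fin_real[OF q(1)] unfolding a_def by auto
        have b: "q (z - y) = ennreal b" "b \<ge> 0" using fin_real[OF q(1)] unfolding b_def by auto
        have "a < s/2" using z(1) a by (simp add: ennreal_less_iff)
        have "b < s/2" using z(2) b by (simp add: ennreal_less_iff)
        have "q (y - x) \<le> q (z - x) + q (- (z - y))" using fin_tri[OF q(1), of "z - x" "- (z - y)"] by simp
        also have "\<dots> = q (z - x) + q (z - y)" by (simp only: fin_neg[OF vs q(1)])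
        also have "\<dots> = ennreal (a + b)" using a b by (simp add: ennreal_plus)
        finally have "ennreal s \<le> ennreal (a + b)" using s1 by simp
        then have "s \<le> a + b" using a b by (simp add: ennreal_le_iff ennreal_plus[symmetric] del: ennreal_plus)
        then show False using \<open>a < s/2\<close> \<open>b < s/2\<close> by simp
      qed
      then show "\<exists>U V. openin TF U \<and> openin TF V \<and> x \<in> U \<and> y \<in> V \<and> disjnt U V"
        using oU oW xU yW by (intro exI conjI)
    qed
  next
    assume HF: "Hausdorff_space TF"
    have "topspace TF = UNIV" "topspace T = UNIV" unfolding P(2) P' by (simp_all add: topspace_sn)
    then show "Hausdorff_space T" by (rule coarser_hausdorff[OF cF _ _ HF])
  qed
qed


theorem proposition3p9:
  fixes \<tau> \<tau>F :: "'a::real_vector topology"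
    and sc :: "complex \<Rightarrow> 'b::ab_group_add \<Rightarrow> 'b"
    and \<upsilon> \<upsilon>F :: "'b topology"
  assumes "ext_lc_topology scaleR \<tau>" and "finest_lc_topology scaleR \<tau> \<tau>F"
    and "vector_space sc"
    and "ext_lc_topology sc \<upsilon>" and "finest_lc_topology sc \<upsilon> \<upsilon>F"
  shows "(Hausdorff_space \<tau> \<longleftrightarrow> Hausdorff_space \<tau>F) \<and>
         (Hausdorff_space \<upsilon> \<longleftrightarrow> Hausdorff_space \<upsilon>F)"
proof
  show "Hausdorff_space \<tau> \<longleftrightarrow> Hausdorff_space \<tau>F"
    by (rule main[OF real_vector.vector_space_axioms assms(1,2)])
  show "Hausdorff_space \<upsilon> \<longleftrightarrow> Hausdorff_space \<upsilon>F"
    by (rule main[OF assms(3,4,5)])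
qed

end
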